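(* Let $\boldsymbol V$ be a generically irreducible $(\boldsymbol{\mathfrak g}_d,K)$-module for $G(\mathbb R)=SL(2,\mathbb R)$. Then $H_{D_d}(\boldsymbol V)=0$ if and only if $\mathcal K(\boldsymbol V)=2\mathbb Z$ or $\mathcal K(\boldsymbol V)=2\mathbb Z+1$. Moreover, for $m\in\mathbb N$ (resp. $m\in\mathbb N_0$ in case 3), as $\boldsymbol{\mathfrak k}$-modules over $\mathbb C[t]$: (1) if $\mathcal K(\boldsymbol V)=\{m,m+2,m+4,\dots\}$ then $H_{D_d}(\boldsymbol V)\cong\mathbb C[t]\{v_m\otimes\tilde y\}$, whose only $\tilde h$-weight is $m-1$; (2) if $\mathcal K(\boldsymbol V)=\{-m,-m-2,\dots\}$ then $H_{D_d}(\boldsymbol V)\cong\mathbb C[t]\{v_{-m}\otimes1\}$, whose only weight is $-m+1$; (3) if $\mathcal K(\boldsymbol V)=\{-m,-m+2,\dots,m\}$ then $H_{D_d}(\boldsymbol V)\cong\mathbb C[t]\{v_m\otimes1,\ v_{-m}\otimes\tilde y\}$, whose only weights are $m+1$ and $-m-1$.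
   Context: $\mathfrak g=\mathfrak{sl}(2,\mathbb C)$, $K=SO(2,\mathbb C)$, with an $\mathfrak{sl}_2$-triple $x,y,h$ ($[x,y]=h$, $[h,x]=2x$, $[h,y]=-2y$) such that $\mathfrak k=\mathbb Ch$, $\mathfrak p=\mathbb Cx\oplus\mathbb Cy$. In $\mathbb C[t]\otimes\mathfrak g$ put $\tilde x=t\otimes x$, $\tilde y=t\otimes y$, $\tilde h=1\otimes h$; the deformation family is $\boldsymbol{\mathfrak g}_d=\boldsymbol{\mathfrak k}\oplus\boldsymbol{\mathfrak p}_d$, $\boldsymbol{\mathfrak k}=\mathbb C[t]\tilde h$, $\boldsymbol{\mathfrak p}_d=\mathbb C[t]\tilde x\oplus\mathbb C[t]\tilde y$, with $[\tilde h,\tilde x]=2\tilde x$, $[\tilde h,\tilde y]=-2\tilde y$, $[\tilde x,\tilde y]=t^2\tilde h$. The form $\boldsymbol\beta_d$ on $\boldsymbol{\mathfrak p}_d$ has $\boldsymbol\beta_d(\tilde x,\tilde x)=\boldsymbol\beta_d(\tilde y,\tilde y)=0$, $\boldsymbol\beta_d(\tilde x,\tilde y)=4$; $Cl(\boldsymbol{\mathfrak p}_d)$ its Clifford algebra ($XY+YX=\boldsymbol\beta_d(X,Y)$) with canonical map $\gamma_d$. Spin module $\boldsymbol S_d=\bigwedge(\mathbb C[t]\tilde y)=\mathbb C[t]1\oplus\mathbb C[t]\tilde y$ with $\gamma_d(\tilde x)1=0$, $\gamma_d(\tilde x)\tilde y=4$, $\gamma_d(\tilde y)1=\tilde y$,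 $\gamma_d(\tilde y)\tilde y=0$; $\tilde h$ acts on $\boldsymbol S_d$ by $\frac12\gamma_d(\tilde x)\gamma_d(\tilde y)-1$ (weights $1$ on $1$, $-1$ on $\tilde y$), and on $\boldsymbol V\otimes\boldsymbol S_d$ diagonally. Dirac operator $D_d=\frac14(\tilde x\otimes\gamma_d(\tilde y)+\tilde y\otimes\gamma_d(\tilde x))$ acting on $\boldsymbol V\otimes_{\mathbb C[t]}\boldsymbol S_d$; $H_{D_d}(\boldsymbol V)=\ker D_d/(\ker D_d\cap\mathrm{im}D_d)$. A generically irreducible $(\boldsymbol{\mathfrak g}_d,K)$-module (flat $\mathbb C[t]$-module with compatible actions, all but countably many fibers irreducible) decomposes as $\boldsymbol V=\bigoplus_{j\in\mathcal K(\boldsymbol V)}\boldsymbol V_j$, $\tilde h$ acting on $\boldsymbol V_j$ by $j$, each $\boldsymbol V_j$ free of rank one with generator $v_j$; $\mathcal K(\boldsymbol V)$ (the set of $K$-types, identified with $\tilde h$-weights) equals the $K$-type set of some irreducible $(\mathfrak{sl}(2,\mathbb C),K)$-module, i.e. one of $\{m,m+2,\dots\}$, $\{-m,-m-2,\dots\}$ ($m\ge1$), $\{-m,\dots,m\}$ ($m\ge0$), $2\mathbb Z$, $2\mathbb Z+1$. *)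

theory Defs
  imports "HOL-Computational_Algebra.Polynomial" "HOL-Library.Countable_Set"
begin

text \<open>Concrete model of a generically irreducible (g_d,K)-module V over C[t] via the
  standing decomposition V = (direct sum over j in K) C[t] v_j:
  x~ v_j = a j * v_(j+2),  y~ v_j = b j * v_(j-2),  h~ v_j = j v_j.\<close>

type_synonym cpoly = "complex poly"
type_synonym vel = "int \<Rightarrow> cpoly"
type_synonym sel = "bool \<Rightarrow> cpoly"           \<comment> \<open>False: coefficient of 1, True: of y~\<close>
type_synonym tel = "int \<Rightarrow> bool \<Rightarrow> cpoly"

definition vbasis :: "int \<Rightarrow> vel" where
  "vbasis j = (\<lambda>i. if i = j then 1 else 0)"

definition sbasis :: "bool \<Rightarrow> sel" where
  "sbasis e = (\<lambda>e'. if e' = e then 1 else 0)"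

definition tbasis :: "int \<Rightarrow> bool \<Rightarrow> tel" where
  "tbasis j e = (\<lambda>i e'. if i = j \<and> e' = e then 1 else 0)"

definition tscale :: "cpoly \<Rightarrow> tel \<Rightarrow> tel" where
  "tscale p F = (\<lambda>i e. p * F i e)"

definition xact :: "(int \<Rightarrow> cpoly) \<Rightarrow> vel \<Rightarrow> vel" where
  "xact a f = (\<lambda>i. a (i - 2) * f (i - 2))"
definition yact :: "(int \<Rightarrow> cpoly) \<Rightarrow> vel \<Rightarrow> vel" where
  "yact b f = (\<lambda>i. b (i + 2) * f (i + 2))"
definition hact :: "vel \<Rightarrow> vel" where
  "hact f = (\<lambda>i. [:of_int i:] * f i)"

definition gx :: "sel \<Rightarrow> sel" where
  "gx s = (\<lambda>e. if e then 0 else 4 * s True)"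
definition gy :: "sel \<Rightarrow> sel" where
  "gy s = (\<lambda>e. if e then s False else 0)"
definition hS :: "sel \<Rightarrow> sel" where
  "hS s = (\<lambda>e. smult (1/2) (gx (gy s) e) - s e)"

definition tsupp :: "tel \<Rightarrow> (int \<times> bool) set" where
  "tsupp F = {p. F (fst p) (snd p) \<noteq> 0}"

definition tensor_op :: "(vel \<Rightarrow> vel) \<Rightarrow> (sel \<Rightarrow> sel) \<Rightarrow> tel \<Rightarrow> tel" where
  "tensor_op A B F = (\<lambda>i e'. \<Sum>p\<in>tsupp F.
      F (fst p) (snd p) * A (vbasis (fst p)) i * B (sbasis (snd p)) e')"

definition dirac :: "(int \<Rightarrow> cpoly) \<Rightarrow> (int \<Rightarrow> cpoly) \<Rightarrow> tel \<Rightarrow> tel" where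
  "dirac a b F = (\<lambda>i e. smult (1/4)
      (tensor_op (xact a) gy F i e + tensor_op (yact b) gx F i e))"

definition htens :: "tel \<Rightarrow> tel" where
  "htens F = (\<lambda>i e. tensor_op hact id F i e + tensor_op id hS F i e)"

definition tspace :: "int set \<Rightarrow> tel set" where
  "tspace K = {F. finite (tsupp F) \<and> (\<forall>j e. F j e \<noteq> 0 \<longrightarrow> j \<in> K)}"

definition kerD :: "int set \<Rightarrow> (int \<Rightarrow> cpoly) \<Rightarrow> (int \<Rightarrow> cpoly) \<Rightarrow> tel set" where
  "kerD K a b = {F \<in> tspace K. dirac a b F = (\<lambda>_ _. 0)}"

definition imD :: "int set \<Rightarrow> (int \<Rightarrow> cpoly) \<Rightarrow> (int \<Rightarrow> cpoly) \<Rightarrow> tel set" where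
  "imD K a b = dirac a b ` tspace K"

text \<open>H_D(V) = ker D / (ker D \<inter> im D) vanishes.\<close>
definition HD_zero :: "int set \<Rightarrow> (int \<Rightarrow> cpoly) \<Rightarrow> (int \<Rightarrow> cpoly) \<Rightarrow> bool" where
  "HD_zero K a b \<longleftrightarrow> kerD K a b \<subseteq> imD K a b"

text \<open>H_D(V) is free over C[t] on the class of u, i.e. p \<mapsto> [p u] is a bijection C[t] \<rightarrow> H_D(V).\<close>
definition HD_free1 :: "int set \<Rightarrow> (int \<Rightarrow> cpoly) \<Rightarrow> (int \<Rightarrow> cpoly) \<Rightarrow> tel \<Rightarrow> bool" where
  "HD_free1 K a b u \<longleftrightarrow> u \<in> kerD K a b \<and>
     (\<forall>F\<in>kerD K a b. \<exists>!p. (\<lambda>i e. F i e - p * u i e) \<in> imD K a b)"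

definition HD_free2 :: "int set \<Rightarrow> (int \<Rightarrow> cpoly) \<Rightarrow> (int \<Rightarrow> cpoly) \<Rightarrow> tel \<Rightarrow> tel \<Rightarrow> bool" where
  "HD_free2 K a b u1 u2 \<longleftrightarrow> u1 \<in> kerD K a b \<and> u2 \<in> kerD K a b \<and>
     (\<forall>F\<in>kerD K a b. \<exists>!pq. (\<lambda>i e. F i e - fst pq * u1 i e - snd pq * u2 i e) \<in> imD K a b)"

text \<open>(g_d,K)-module axioms: x~ V_j \<subseteq> V_(j+2), y~ V_j \<subseteq> V_(j-2), [x~,y~] = t^2 h~.\<close>
definition gK_module :: "int set \<Rightarrow> (int \<Rightarrow> cpoly) \<Rightarrow> (int \<Rightarrow> cpoly) \<Rightarrow> bool" where
  "gK_module K a b \<longleftrightarrow>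
     (\<forall>j\<in>K. j + 2 \<notin> K \<longrightarrow> a j = 0) \<and>
     (\<forall>j\<in>K. j - 2 \<notin> K \<longrightarrow> b j = 0) \<and>
     (\<forall>j\<in>K. b j * a (j - 2) - a j * b (j + 2) = monom (of_int j) 2)"

text \<open>Fibre at t = s: the complex space with basis v_j (j \<in> K).\<close>
definition fspace :: "int set \<Rightarrow> (int \<Rightarrow> complex) set" where
  "fspace K = {f. finite {i. f i \<noteq> 0} \<and> (\<forall>i. f i \<noteq> 0 \<longrightarrow> i \<in> K)}"

definition fx :: "(int \<Rightarrow> cpoly) \<Rightarrow> complex \<Rightarrow> (int \<Rightarrow> complex) \<Rightarrow> int \<Rightarrow> complex" where
  "fx a s f = (\<lambda>i. poly (a (i - 2)) s * f (i - 2))"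
definition fy :: "(int \<Rightarrow> cpoly) \<Rightarrow> complex \<Rightarrow> (int \<Rightarrow> complex) \<Rightarrow> int \<Rightarrow> complex" where
  "fy b s f = (\<lambda>i. poly (b (i + 2)) s * f (i + 2))"
definition fh :: "(int \<Rightarrow> complex) \<Rightarrow> int \<Rightarrow> complex" where
  "fh f = (\<lambda>i. of_int i * f i)"
definition fk :: "complex \<Rightarrow> (int \<Rightarrow> complex) \<Rightarrow> int \<Rightarrow> complex" where
  \<comment> \<open>action of z \<in> SO(2,C) = C^*\<close>
  "fk z f = (\<lambda>i. z powi i * f i)"

definition invariant_sub ::
  "int set \<Rightarrow> (int \<Rightarrow> cpoly) \<Rightarrow> (int \<Rightarrow> cpoly) \<Rightarrow> complex \<Rightarrow> (int \<Rightarrow> complex) set \<Rightarrow> bool" where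
  "invariant_sub K a b s W \<longleftrightarrow> W \<subseteq> fspace K \<and> (\<lambda>_. 0) \<in> W \<and>
     (\<forall>f\<in>W. \<forall>g\<in>W. (\<lambda>i. f i + g i) \<in> W) \<and> (\<forall>c. \<forall>f\<in>W. (\<lambda>i. c * f i) \<in> W) \<and>
     (\<forall>f\<in>W. fx a s f \<in> W \<and> fy b s f \<in> W \<and> fh f \<in> W) \<and>
     (\<forall>z. z \<noteq> 0 \<longrightarrow> (\<forall>f\<in>W. fk z f \<in> W))"

definition fiber_irreducible :: "int set \<Rightarrow> (int \<Rightarrow> cpoly) \<Rightarrow> (int \<Rightarrow> cpoly) \<Rightarrow> complex \<Rightarrow> bool" where
  "fiber_irreducible K a b s \<longleftrightarrow> fspace K \<noteq> {\<lambda>_. 0} \<and>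
     (\<forall>W. invariant_sub K a b s W \<longrightarrow> W = {\<lambda>_. 0} \<or> W = fspace K)"

definition generically_irreducible :: "int set \<Rightarrow> (int \<Rightarrow> cpoly) \<Rightarrow> (int \<Rightarrow> cpoly) \<Rightarrow> bool" where
  "generically_irreducible K a b \<longleftrightarrow> gK_module K a b \<and>
     countable {s. \<not> fiber_irreducible K a b s}"

text \<open>K-type sets of irreducible (sl(2,C),K)-modules.\<close>
definition sl2_Ktype_set :: "int set \<Rightarrow> bool" where
  "sl2_Ktype_set K \<longleftrightarrow>
     (\<exists>m\<ge>1. K = {j. m \<le> j \<and> even (j - m)}) \<or>
     (\<exists>m\<ge>1. K = {j. j \<le> -m \<and> even (j + m)}) \<or>
     (\<exists>m\<ge>0. K = {j. -m \<le> j \<and> j \<le> m \<and> even (j - m)}) \<or>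
     K = {j. even j} \<or> K = {j. odd j}"

end

theory Submission
  imports Defs "HOL-Analysis.Continuum_Not_Denumerable"
begin

lemma tensor_op_delta:
  assumes "finite (tsupp F)"
    and "\<And>j e. A (vbasis j) i * B (sbasis e) e' = (if (j,e) = q then c else 0)"
  shows "tensor_op A B F i e' = F (fst q) (snd q) * c"
proof -
  have "tensor_op A B F i e' = (\<Sum>p\<in>tsupp F. if p = q then F (fst q) (snd q) * c else 0)"
    unfolding tensor_op_def
  proof (rule sum.cong)
    fix p assume "p \<in> tsupp F"
    show "F (fst p) (snd p) * A (vbasis (fst p)) i * B (sbasis (snd p)) e' =
      (if p = q then F (fst q) (snd q) * c else 0)"
      using assms(2)[of "fst p" "snd p"] by (cases p) (auto simp: mult.assoc)
  qed simp
  also have "\<dots> = F (fst q) (snd q) * c"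
    using assms(1) by (auto simp: sum.delta' tsupp_def)
  finally show ?thesis .
qed

lemma dirac_F:
  assumes "finite (tsupp F)"
  shows "dirac a b F i e = (if e then smult (1/4) (a (i-2) * F (i-2) False) else b (i+2) * F (i+2) True)"
proof -
  have 1: "tensor_op (xact a) gy F i e = F (i-2) False * (if e then a (i-2) else 0)"
    by (rule tensor_op_delta[OF assms, where q="(i-2,False)", simplified])
       (auto simp: xact_def gy_def vbasis_def sbasis_def)
  have 2: "tensor_op (yact b) gx F i e = F (i+2) True * (if e then 0 else 4 * b (i+2))"
    by (rule tensor_op_delta[OF assms, where q="(i+2,True)", simplified])
       (auto simp: yact_def gx_def vbasis_def sbasis_def)
  have s4: "smult (1/4) (4 * p) = (p :: complex poly)" for p
    by (simp add: numeral_poly )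
  show ?thesis unfolding dirac_def 1 2 using s4[of "b (i+2) * F (i+2) True"] by (auto simp: algebra_simps)
qed

lemma fin_shift:
  fixes f :: "int \<Rightarrow> complex" and c :: int
  assumes "finite {i. f i \<noteq> (0::complex)}"
  shows "finite {i. g i * f (i + c) \<noteq> 0}"
proof -
  have "{i. g i * f (i + c) \<noteq> 0} \<subseteq> (\<lambda>i. i - c) ` {i. f i \<noteq> 0}"
    by (auto intro!: image_eqI[where x="_ + c"])
  then show ?thesis using assms finite_subset by blast
qed

lemma reducible_fiber:
  assumes gK: "gK_module K a b"
    and Sa: "\<forall>k\<in>S\<inter>K. a k \<noteq> 0 \<longrightarrow> k+2 \<in> S"
    and Sb: "\<forall>k\<in>S\<inter>K. b k \<noteq> 0 \<longrightarrow> k-2 \<in> S"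
    and j: "j \<in> S" "j \<in> K" and j': "j' \<in> K" "j' \<notin> S"
  shows "\<not> fiber_irreducible K a b s"
proof
  assume irr: "fiber_irreducible K a b s"
  have Ka: "\<forall>k\<in>K. a k \<noteq> 0 \<longrightarrow> k+2 \<in> K" and Kb: "\<forall>k\<in>K. b k \<noteq> 0 \<longrightarrow> k-2 \<in> K"
    using gK unfolding gK_module_def by blast+
  define W where "W = {f\<in>fspace K. \<forall>i. f i \<noteq> 0 \<longrightarrow> i \<in> S}"
  have inv: "invariant_sub K a b s W"
    unfolding invariant_sub_def
  proof (intro conjI ballI allI impI)
    show "W \<subseteq> fspace K" by (auto simp: W_def)
    show "(\<lambda>_. 0) \<in> W" by (auto simp: W_def fspace_def)
  next
    fix f g assume "f \<in> W" "g \<in> W"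
    then show "(\<lambda>i. f i + g i) \<in> W"
      unfolding W_def fspace_def
      by (auto intro: finite_subset[where B="{i. f i \<noteq> 0} \<union> {i. g i \<noteq> 0}"]) (metis add_0)+
  next
    fix c f assume "f \<in> W"
    then show "(\<lambda>i. c * f i) \<in> W"
      unfolding W_def fspace_def
      by (auto intro: finite_subset[where B="{i. f i \<noteq> 0}"])
  next
    fix z :: complex and f assume "z \<noteq> 0" "f \<in> W"
    then show "fk z f \<in> W"
      unfolding W_def fspace_def fk_def
      by (auto intro: finite_subset[where B="{i. f i \<noteq> 0}"])
  next
    fix f assume f: "f \<in> W"
    have ff: "finite {i. f i \<noteq> 0}" and fK: "\<And>i. f i \<noteq> 0 \<Longrightarrow> i \<in> K"
      and fS: "\<And>i. f i \<noteq> 0 \<Longrightarrow> i \<in> S"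
      using f by (auto simp: W_def fspace_def)
    show "fx a s f \<in> W"
      unfolding W_def fspace_def fx_def
    proof (intro CollectI conjI allI impI)
      show "finite {i. poly (a (i - 2)) s * f (i - 2) \<noteq> 0}"
        using fin_shift[OF ff, of "\<lambda>i. poly (a (i - 2)) s" "-2"] by simp
    next
      fix i assume "poly (a (i - 2)) s * f (i - 2) \<noteq> 0"
      then have "a (i-2) \<noteq> 0" "f (i-2) \<noteq> 0" by auto
      then show "i \<in> K" "i \<in> S" using Ka Sa fK fS by force+
    qed
    show "fy b s f \<in> W"
      unfolding W_def fspace_def fy_def
    proof (intro CollectI conjI allI impI)
      show "finite {i. poly (b (i + 2)) s * f (i + 2) \<noteq> 0}"
        using fin_shift[OF ff, of "\<lambda>i. poly (b (i + 2)) s" "2"] by simp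
    next
      fix i assume "poly (b (i + 2)) s * f (i + 2) \<noteq> 0"
      then have "b (i+2) \<noteq> 0" "f (i+2) \<noteq> 0" by auto
      then show "i \<in> K" "i \<in> S" using Kb Sb fK fS by force+
    qed
    show "fh f \<in> W"
      using f unfolding W_def fspace_def fh_def
      by (auto intro: finite_subset[where B="{i. f i \<noteq> 0}"])
  qed
  have "(\<lambda>i. if i = j then 1 else 0) \<in> W" using j by (auto simp: W_def fspace_def)
  moreover have "(\<lambda>i. if i = j then (1::complex) else 0) \<noteq> (\<lambda>_. 0)" by (metis one_neq_zero)
  moreover have "(\<lambda>i. if i = j' then 1 else 0) \<in> fspace K" using j' by (auto simp: fspace_def)
  moreover have "(\<lambda>i. if i = j' then 1 else 0) \<notin> W" using j' by (auto simp: W_def)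
  ultimately show False using irr inv unfolding fiber_irreducible_def by blast
qed

lemma gen_irr_nz:
  assumes "generically_irreducible K a b" "j \<in> K" "j + 2 \<in> K"
  shows "a j \<noteq> 0 \<and> b (j+2) \<noteq> 0"
proof -
  have gK: "gK_module K a b" and cnt: "countable {s. \<not> fiber_irreducible K a b s}"
    using assms(1) by (auto simp: generically_irreducible_def)
  have allred: False if "\<And>s. \<not> fiber_irreducible K a b s"
  proof -
    have "{s. \<not> fiber_irreducible K a b s} = UNIV" using that by auto
    then show False using cnt uncountable_UNIV_complex by simp
  qed
  show ?thesis
  proof (intro conjI notI)
    assume a0: "a j = 0"
    show False
    proof (rule allred, rule reducible_fiber[OF gK, where S="{i. i \<le> j \<and> even (i - j)}" and j=j and j'="j+2"])
      show "\<forall>k\<in>{i. i \<le> j \<and> even (i - j)} \<inter> K. a k \<noteq> 0 \<longrightarrow> k + 2 \<in> {i. i \<le> j \<and> even (i - j)}"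
      proof safe
        fix k assume "k \<le> j" "even (k - j)" "a k \<noteq> 0"
        then have "k \<noteq> j" using a0 by auto
        with \<open>k \<le> j\<close> \<open>even (k - j)\<close> have "k \<le> j - 2" by presburger
        then show "k + 2 \<le> j" by simp
        show "even (k + 2 - j)" using \<open>even (k - j)\<close> by presburger
      qed
      show "\<forall>k\<in>{i. i \<le> j \<and> even (i - j)} \<inter> K. b k \<noteq> 0 \<longrightarrow> k - 2 \<in> {i. i \<le> j \<and> even (i - j)}"
        by (auto; presburger)
    qed (use assms in auto)
  next
    assume b0: "b (j+2) = 0"
    show False
    proof (rule allred, rule reducible_fiber[OF gK, where S="{i. j + 2 \<le> i \<and> even (i - j)}" and j="j+2" and j'="j"])
      show "\<forall>k\<in>{i. j + 2 \<le> i \<and> even (i - j)} \<inter> K. b k \<noteq> 0 \<longrightarrow> k - 2 \<in> {i. j + 2 \<le> i \<and> even (i - j)}"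
      proof safe
        fix k assume "j + 2 \<le> k" "even (k - j)" "b k \<noteq> 0"
        then have "k \<noteq> j + 2" using b0 by auto
        with \<open>j + 2 \<le> k\<close> \<open>even (k - j)\<close> have "j + 4 \<le> k" by presburger
        then show "j + 2 \<le> k - 2" by simp
        show "even (k - 2 - j)" using \<open>even (k - j)\<close> by presburger
      qed
      show "\<forall>k\<in>{i. j + 2 \<le> i \<and> even (i - j)} \<inter> K. a k \<noteq> 0 \<longrightarrow> k + 2 \<in> {i. j + 2 \<le> i \<and> even (i - j)}"
        by (auto; presburger)
    qed (use assms in auto)
  qed
qed

lemma tsupp_tbasis: "tsupp (tbasis j e) = {(j,e)}"
  by (auto simp: tsupp_def tbasis_def)

lemma tbasis_tspace: "j \<in> K \<Longrightarrow> tbasis j e \<in> tspace K"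
  unfolding tspace_def mem_Collect_eq tsupp_tbasis by (auto simp: tbasis_def)

lemma htens_tbasis:
  "htens (tbasis j e) = tscale [:of_int j + (if e then -1 else 1):] (tbasis j e)"
proof (rule ext, rule ext)
  fix i e'
  have fin: "finite (tsupp (tbasis j e))" by (simp add: tsupp_tbasis)
  have 1: "tensor_op hact id (tbasis j e) i e' = tbasis j e i e' * [:of_int i:]"
    by (rule tensor_op_delta[OF fin, where q="(i,e')", simplified])
       (auto simp: hact_def vbasis_def sbasis_def)
  have h4: "smult (1/2) (4::complex poly) = 2" by (simp add: numeral_poly)
  have 2: "tensor_op id hS (tbasis j e) i e' = tbasis j e i e' * (if e' then -1 else 1)"
    by (rule tensor_op_delta[OF fin, where q="(i,e')", simplified])
       (auto simp: hS_def gx_def gy_def vbasis_def sbasis_def h4)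
  show "htens (tbasis j e) i e' = tscale [:of_int j + (if e then -1 else 1):] (tbasis j e) i e'"
    unfolding htens_def 1 2 tscale_def
    by (auto simp: tbasis_def algebra_simps one_pCons)
qed

lemma zero_im: "(\<lambda>_ _. 0) \<in> imD K a b"
proof -
  have "(\<lambda>_ _. 0) \<in> tspace K" by (simp add: tspace_def tsupp_def)
  moreover have "dirac a b (\<lambda>_ _. 0) = (\<lambda>_ _. 0)"
    by (intro ext) (simp add: dirac_F tsupp_def)
  ultimately show ?thesis unfolding imD_def by (metis image_eqI)
qed

lemma im_slots:
  assumes "G \<in> imD K a b"
  shows "j + 2 \<notin> K \<Longrightarrow> G j False = 0" and "j - 2 \<notin> K \<Longrightarrow> G j True = 0"
proof -
  obtain F where F: "F \<in> tspace K" "G = dirac a b F" using assms by (auto simp: imD_def)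
  have fin: "finite (tsupp F)" and sK: "\<And>i e. F i e \<noteq> 0 \<Longrightarrow> i \<in> K"
    using F(1) by (auto simp: tspace_def)
  show "j + 2 \<notin> K \<Longrightarrow> G j False = 0" using F(2) dirac_F[OF fin] sK by fastforce
  show "j - 2 \<notin> K \<Longrightarrow> G j True = 0" using F(2) dirac_F[OF fin] sK by fastforce
qed

lemma ker_slots:
  assumes nz: "\<And>j. j \<in> K \<Longrightarrow> j + 2 \<in> K \<Longrightarrow> a j \<noteq> 0 \<and> b (j+2) \<noteq> 0"
    and F: "F \<in> kerD K a b"
  shows "F j False \<noteq> 0 \<Longrightarrow> j \<in> K \<and> j + 2 \<notin> K"
    and "F j True \<noteq> 0 \<Longrightarrow> j \<in> K \<and> j - 2 \<notin> K"
proof -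
  have fin: "finite (tsupp F)" and sK: "\<And>i e. F i e \<noteq> 0 \<Longrightarrow> i \<in> K"
    and D: "\<And>i e. dirac a b F i e = 0"
    using F by (auto simp: tspace_def kerD_def)
  show "F j False \<noteq> 0 \<Longrightarrow> j \<in> K \<and> j + 2 \<notin> K"
  proof
    assume h: "F j False \<noteq> 0"
    show jK: "j \<in> K" using sK h .
    show "j + 2 \<notin> K"
    proof
      assume "j + 2 \<in> K"
      then have "a j \<noteq> 0" using nz jK by blast
      moreover have "dirac a b F (j+2) True = smult (1/4) (a j * F j False)"
        by (simp add: dirac_F[OF fin])
      ultimately show False using D h by simp
    qed
  qed
  show "F j True \<noteq> 0 \<Longrightarrow> j \<in> K \<and> j - 2 \<notin> K"
  proof
    assume h: "F j True \<noteq> 0"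
    show jK: "j \<in> K" using sK h .
    show "j - 2 \<notin> K"
    proof
      assume "j - 2 \<in> K"
      then have "b j \<noteq> 0" using nz[of "j-2"] jK by simp
      moreover have "dirac a b F (j-2) False = b j * F j True"
        by (simp add: dirac_F[OF fin])
      ultimately show False using D h by simp
    qed
  qed
qed

lemma top_ker:
  assumes "gK_module K a b" "j \<in> K" "j + 2 \<notin> K"
  shows "tbasis j False \<in> kerD K a b"
proof -
  have "a j = 0" using assms unfolding gK_module_def by blast
  moreover have fin: "finite (tsupp (tbasis j False))" by (simp add: tsupp_tbasis)
  ultimately have "dirac a b (tbasis j False) = (\<lambda>_ _. 0)"
    apply (intro ext) apply (simp only: dirac_F[OF fin]) by (auto simp: tbasis_def)
  then show ?thesis using tbasis_tspace[OF assms(2)] by (simp add: kerD_def)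
qed

lemma bot_ker:
  assumes "gK_module K a b" "j \<in> K" "j - 2 \<notin> K"
  shows "tbasis j True \<in> kerD K a b"
proof -
  have "b j = 0" using assms unfolding gK_module_def by blast
  moreover have fin: "finite (tsupp (tbasis j True))" by (simp add: tsupp_tbasis)
  ultimately have "dirac a b (tbasis j True) = (\<lambda>_ _. 0)"
    apply (intro ext) apply (simp only: dirac_F[OF fin]) by (auto simp: tbasis_def)
  then show ?thesis using tbasis_tspace[OF assms(2)] by (simp add: kerD_def)
qed

lemma not_HD_zero:
  assumes "gK_module K a b" "j \<in> K" "j + 2 \<notin> K \<or> j - 2 \<notin> K"
  shows "\<not> HD_zero K a b"
proof
  assume z: "HD_zero K a b"
  show False
  proof (cases "j + 2 \<notin> K")
    case True
    then have "tbasis j False \<in> imD K a b" using top_ker[OF assms(1,2)] z by (auto simp: HD_zero_def)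
    then have "tbasis j False j False = 0" using im_slots(1) True by blast
    then show False by (simp add: tbasis_def)
  next
    case False
    then have "tbasis j True \<in> imD K a b" using bot_ker[OF assms(1,2)] assms(3) z by (auto simp: HD_zero_def)
    then have "tbasis j True j True = 0" using im_slots(2) False assms(3) by blast
    then show False by (simp add: tbasis_def)
  qed
qed

lemma free1_bot:
  assumes nz: "\<And>j. j \<in> K \<Longrightarrow> j + 2 \<in> K \<Longrightarrow> a j \<noteq> 0 \<and> b (j+2) \<noteq> 0"
    and gK: "gK_module K a b" and jK: "j \<in> K" "j - 2 \<notin> K"
    and notop: "\<And>i. i \<in> K \<Longrightarrow> i + 2 \<in> K"
    and onlybot: "\<And>i. i \<in> K \<Longrightarrow> i - 2 \<notin> K \<Longrightarrow> i = j"
  shows "HD_free1 K a b (tbasis j True)"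
  unfolding HD_free1_def
proof (intro conjI ballI)
  show "tbasis j True \<in> kerD K a b" using bot_ker[OF gK jK] .
  fix F assume F: "F \<in> kerD K a b"
  have Fz: "F i e = 0" if "(i,e) \<noteq> (j,True)" for i e
  proof (rule ccontr)
    assume "F i e \<noteq> 0"
    then show False using ker_slots[OF nz F, of i] that notop onlybot by (cases e) auto
  qed
  have eq: "(\<lambda>i e. F i e - p * tbasis j True i e) \<in> imD K a b \<longleftrightarrow> p = F j True" for p
  proof
    assume "(\<lambda>i e. F i e - p * tbasis j True i e) \<in> imD K a b"
    from im_slots(2)[OF this jK(2)] show "p = F j True" by (simp add: tbasis_def)
  next
    assume p: "p = F j True"
    have "(\<lambda>i e. F i e - p * tbasis j True i e) = (\<lambda>_ _. 0)"
      using Fz by (intro ext) (auto simp: tbasis_def p)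
    then show "(\<lambda>i e. F i e - p * tbasis j True i e) \<in> imD K a b" using zero_im by simp
  qed
  show "\<exists>!p. (\<lambda>i e. F i e - p * tbasis j True i e) \<in> imD K a b"
    by (simp only: eq) simp
qed

lemma free1_top:
  assumes nz: "\<And>j. j \<in> K \<Longrightarrow> j + 2 \<in> K \<Longrightarrow> a j \<noteq> 0 \<and> b (j+2) \<noteq> 0"
    and gK: "gK_module K a b" and jK: "j \<in> K" "j + 2 \<notin> K"
    and nobot: "\<And>i. i \<in> K \<Longrightarrow> i - 2 \<in> K"
    and onlytop: "\<And>i. i \<in> K \<Longrightarrow> i + 2 \<notin> K \<Longrightarrow> i = j"
  shows "HD_free1 K a b (tbasis j False)"
  unfolding HD_free1_def
proof (intro conjI ballI)
  show "tbasis j False \<in> kerD K a b" using top_ker[OF gK jK] .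
  fix F assume F: "F \<in> kerD K a b"
  have Fz: "F i e = 0" if "(i,e) \<noteq> (j,False)" for i e
  proof (rule ccontr)
    assume "F i e \<noteq> 0"
    then show False using ker_slots[OF nz F, of i] that nobot onlytop by (cases e) auto
  qed
  have eq: "(\<lambda>i e. F i e - p * tbasis j False i e) \<in> imD K a b \<longleftrightarrow> p = F j False" for p
  proof
    assume "(\<lambda>i e. F i e - p * tbasis j False i e) \<in> imD K a b"
    from im_slots(1)[OF this jK(2)] show "p = F j False" by (simp add: tbasis_def)
  next
    assume p: "p = F j False"
    have "(\<lambda>i e. F i e - p * tbasis j False i e) = (\<lambda>_ _. 0)"
      using Fz by (intro ext) (auto simp: tbasis_def p)
    then show "(\<lambda>i e. F i e - p * tbasis j False i e) \<in> imD K a b" using zero_im by simp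
  qed
  show "\<exists>!p. (\<lambda>i e. F i e - p * tbasis j False i e) \<in> imD K a b"
    by (simp only: eq) simp
qed

lemma free2:
  assumes nz: "\<And>j. j \<in> K \<Longrightarrow> j + 2 \<in> K \<Longrightarrow> a j \<noteq> 0 \<and> b (j+2) \<noteq> 0"
    and gK: "gK_module K a b" and j1: "j1 \<in> K" "j1 + 2 \<notin> K"
    and j2: "j2 \<in> K" "j2 - 2 \<notin> K"
    and onlytop: "\<And>i. i \<in> K \<Longrightarrow> i + 2 \<notin> K \<Longrightarrow> i = j1"
    and onlybot: "\<And>i. i \<in> K \<Longrightarrow> i - 2 \<notin> K \<Longrightarrow> i = j2"
  shows "HD_free2 K a b (tbasis j1 False) (tbasis j2 True)"
  unfolding HD_free2_def
proof (intro conjI ballI)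
  show "tbasis j1 False \<in> kerD K a b" using top_ker[OF gK j1] .
  show "tbasis j2 True \<in> kerD K a b" using bot_ker[OF gK j2] .
  fix F assume F: "F \<in> kerD K a b"
  have Fz: "F i e = 0" if "(i,e) \<noteq> (j1,False)" "(i,e) \<noteq> (j2,True)" for i e
  proof (rule ccontr)
    assume "F i e \<noteq> 0"
    then show False using ker_slots[OF nz F, of i] that onlytop onlybot by (cases e) auto
  qed
  have eq: "(\<lambda>i e. F i e - fst pq * tbasis j1 False i e - snd pq * tbasis j2 True i e) \<in> imD K a b
     \<longleftrightarrow> pq = (F j1 False, F j2 True)" for pq
  proof
    assume h: "(\<lambda>i e. F i e - fst pq * tbasis j1 False i e - snd pq * tbasis j2 True i e) \<in> imD K a b"
    from im_slots(1)[OF h j1(2)] im_slots(2)[OF h j2(2)]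
    show "pq = (F j1 False, F j2 True)" by (cases pq) (simp add: tbasis_def)
  next
    assume p: "pq = (F j1 False, F j2 True)"
    have "(\<lambda>i e. F i e - fst pq * tbasis j1 False i e - snd pq * tbasis j2 True i e) = (\<lambda>_ _. 0)"
      using Fz by (intro ext) (auto simp: tbasis_def p)
    then show "(\<lambda>i e. F i e - fst pq * tbasis j1 False i e - snd pq * tbasis j2 True i e) \<in> imD K a b"
      using zero_im by simp
  qed
  show "\<exists>!pq. (\<lambda>i e. F i e - fst pq * tbasis j1 False i e - snd pq * tbasis j2 True i e) \<in> imD K a b"
    by (simp only: eq) simp
qed

theorem mainTheorem15:
  fixes K :: "int set" and a b :: "int \<Rightarrow> complex poly"
  assumes "generically_irreducible K a b"
    and "sl2_Ktype_set K"
  shows "(HD_zero K a b \<longleftrightarrow> K = {j. even j} \<or> K = {j. odd j})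
    \<and> (\<forall>m::int. m \<ge> 1 \<longrightarrow> K = {j. m \<le> j \<and> even (j - m)} \<longrightarrow>
          HD_free1 K a b (tbasis m True)
          \<and> htens (tbasis m True) = tscale [:of_int (m - 1):] (tbasis m True))
    \<and> (\<forall>m::int. m \<ge> 1 \<longrightarrow> K = {j. j \<le> -m \<and> even (j + m)} \<longrightarrow>
          HD_free1 K a b (tbasis (-m) False)
          \<and> htens (tbasis (-m) False) = tscale [:of_int (-m + 1):] (tbasis (-m) False))
    \<and> (\<forall>m::int. m \<ge> 0 \<longrightarrow> K = {j. -m \<le> j \<and> j \<le> m \<and> even (j - m)} \<longrightarrow>
          HD_free2 K a b (tbasis m False) (tbasis (-m) True)
          \<and> htens (tbasis m False) = tscale [:of_int (m + 1):] (tbasis m False)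
          \<and> htens (tbasis (-m) True) = tscale [:of_int (-m - 1):] (tbasis (-m) True))"
proof -
  have gK: "gK_module K a b" using assms(1) by (simp add: generically_irreducible_def)
  have nz: "\<And>j. j \<in> K \<Longrightarrow> j + 2 \<in> K \<Longrightarrow> a j \<noteq> 0 \<and> b (j+2) \<noteq> 0"
    using gen_irr_nz[OF assms(1)] by blast
  have P1: "HD_free1 K a b (tbasis m True)
          \<and> htens (tbasis m True) = tscale [:of_int (m - 1):] (tbasis m True)"
    if "m \<ge> 1" "K = {j. m \<le> j \<and> even (j - m)}" for m
  proof
    show "HD_free1 K a b (tbasis m True)"
    proof (rule free1_bot[OF nz gK], assumption+)

      show "m \<in> K" "m - 2 \<notin> K" using that by simp_all
      next
      fix i assume "i \<in> K"
      then show "i + 2 \<in> K" using that by (simp; presburger)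
      next
      fix i assume "i \<in> K"
      then show "i - 2 \<notin> K \<Longrightarrow> i = m" using that by (simp; presburger)
    qed
    show "htens (tbasis m True) = tscale [:of_int (m - 1):] (tbasis m True)"
      by (simp add: htens_tbasis)
  qed
  have P2: "HD_free1 K a b (tbasis (-m) False)
          \<and> htens (tbasis (-m) False) = tscale [:of_int (-m + 1):] (tbasis (-m) False)"
    if "m \<ge> 1" "K = {j. j \<le> -m \<and> even (j + m)}" for m
  proof
    show "HD_free1 K a b (tbasis (-m) False)"
    proof (rule free1_top[OF nz gK], assumption+)
      show "-m \<in> K" "-m + 2 \<notin> K" using that by simp_all
      next
      fix i assume "i \<in> K"
      then show "i - 2 \<in> K" using that by (simp; presburger)
      next
      fix i assume "i \<in> K"
      then show "i + 2 \<notin> K \<Longrightarrow> i = -m" using that by (simp; presburger)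
    qed
    show "htens (tbasis (-m) False) = tscale [:of_int (-m + 1):] (tbasis (-m) False)"
      by (simp add: htens_tbasis add.commute)
  qed
  have P3: "HD_free2 K a b (tbasis m False) (tbasis (-m) True)
          \<and> htens (tbasis m False) = tscale [:of_int (m + 1):] (tbasis m False)
          \<and> htens (tbasis (-m) True) = tscale [:of_int (-m - 1):] (tbasis (-m) True)"
    if "m \<ge> 0" "K = {j. -m \<le> j \<and> j \<le> m \<and> even (j - m)}" for m
  proof (intro conjI)
    show "HD_free2 K a b (tbasis m False) (tbasis (-m) True)"
    proof (rule free2[OF nz gK], assumption+)
      show "m \<in> K" "m + 2 \<notin> K" "-m \<in> K" "-m - 2 \<notin> K" using that by simp_all
      next
      fix i assume "i \<in> K"
      then show "i + 2 \<notin> K \<Longrightarrow> i = m" using that by (simp; presburger)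
      next
      fix i assume "i \<in> K"
      then show "i - 2 \<notin> K \<Longrightarrow> i = -m" using that by (simp; presburger)
    qed
    show "htens (tbasis m False) = tscale [:of_int (m + 1):] (tbasis m False)"
      by (simp add: htens_tbasis)
    show "htens (tbasis (-m) True) = tscale [:of_int (-m - 1):] (tbasis (-m) True)"
      by (simp add: htens_tbasis)
  qed
  have A: "HD_zero K a b \<longleftrightarrow> K = {j. even j} \<or> K = {j. odd j}"
  proof
    assume z: "HD_zero K a b"
    show "K = {j. even j} \<or> K = {j. odd j}"
    proof (rule ccontr)
      assume n: "\<not> (K = {j. even j} \<or> K = {j. odd j})"
      have "\<exists>m. m \<in> K \<and> (m + 2 \<notin> K \<or> m - 2 \<notin> K)"
      proof -
        from assms(2) n consider (c1) m where "m \<ge> 1" "K = {j. m \<le> j \<and> even (j - m)}"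
          | (c2) m where "m \<ge> 1" "K = {j. j \<le> -m \<and> even (j + m)}"
          | (c3) m where "m \<ge> 0" "K = {j. -m \<le> j \<and> j \<le> m \<and> even (j - m)}"
          unfolding sl2_Ktype_set_def by blast
        then show ?thesis
        proof cases
          case (c1 m) then show ?thesis by (intro exI[of _ m]) simp
        next
          case (c2 m) then show ?thesis by (intro exI[of _ "-m"]) simp
        next
          case (c3 m) then show ?thesis by (intro exI[of _ m]) simp
        qed
      qed
      then obtain m where "m \<in> K \<and> (m + 2 \<notin> K \<or> m - 2 \<notin> K)" by blast
      then show False using not_HD_zero[OF gK] z by blast
    qed
  next
    assume K: "K = {j. even j} \<or> K = {j. odd j}"
    show "HD_zero K a b" unfolding HD_zero_def
    proof
      fix F assume F: "F \<in> kerD K a b"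
      have "F = (\<lambda>_ _. 0)"
      proof (intro ext)
        fix i e show "F i e = 0"
        proof (rule ccontr)
          assume "F i e \<noteq> 0"
          moreover have "i \<in> K \<Longrightarrow> i + 2 \<in> K \<and> i - 2 \<in> K" using K by auto
          ultimately show False using ker_slots[OF nz F, of i] by (cases e) auto
        qed
      qed
      then show "F \<in> imD K a b" using zero_im by simp
    qed
  qed
  show ?thesis using A P1 P2 P3 by blast
qed

end
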